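(* Let $n \ge 3$ be an integer and let $I$ be a degree-based topological index with coefficients $c_{12},c_{13},c_{22},c_{23},c_{33}$. Define $c'_{12} = c_{12}-4c_{22}+3c_{23}$, $c'_{13} = c_{13}-3c_{22}+2c_{23}$, $c'_{33} = c_{22}-2c_{23}+c_{33}$. If $c'_{13}>c'_{12}>-c'_{33}>0$, then the path $P_n$ on $n$ vertices is, up to isomorphism, the only tree in $\mathcal{G}_3(n,n-1)$ that minimizes $I$.
   Context: For integers $n,m$, $\mathcal{G}_3(n,m)$ denotes the set of simple connected undirected graphs (chemical graphs) with $n$ vertices, $m$ edges and maximum degree at most $3$; in particular $\mathcal{G}_3(n,n-1)$ is the set of trees of order $n$ with maximum degree at most $3$. For a graph $G$ and $1\le i\le j$, an $ij$-edge is an edge whose endpoints have degrees $i$ and $j$, and $m_{ij}$ denotes the number of $ij$-edges of $G$. A degree-based topological index $I$ is a function on chemical graphs of order $n\ge 3$ of the form $I(G)=c_{12}m_{12}+c_{13}m_{13}+c_{22}m_{22}+c_{23}m_{23}+c_{33}m_{33}$, where the $c_{ij}$ are fixed real numbers. *)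

theory Defs
  imports Complex_Main
begin

definition simple_graph :: "'a set \<Rightarrow> 'a set set \<Rightarrow> bool" where
  "simple_graph V E \<longleftrightarrow> finite V \<and>
     (\<forall>e\<in>E. \<exists>u v. e = {u, v} \<and> u \<noteq> v \<and> u \<in> V \<and> v \<in> V)"

definition adj_rel :: "'a set set \<Rightarrow> ('a \<times> 'a) set" where
  "adj_rel E = {(u, v). {u, v} \<in> E}"

definition graph_connected :: "'a set \<Rightarrow> 'a set set \<Rightarrow> bool" where
  "graph_connected V E \<longleftrightarrow> (\<forall>u\<in>V. \<forall>v\<in>V. (u, v) \<in> (adj_rel E)\<^sup>*)"

definition vdeg :: "'a set set \<Rightarrow> 'a \<Rightarrow> nat" where
  "vdeg E v = card {e \<in> E. v \<in> e}"

text \<open>The class G_3(n,m): connected simple graphs with n vertices, m edges, max degree at most 3.\<close>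
definition chem_graph :: "nat \<Rightarrow> nat \<Rightarrow> 'a set \<Rightarrow> 'a set set \<Rightarrow> bool" where
  "chem_graph n m V E \<longleftrightarrow> simple_graph V E \<and> graph_connected V E \<and>
     card V = n \<and> card E = m \<and> (\<forall>v\<in>V. vdeg E v \<le> 3)"

definition m_edges :: "'a set set \<Rightarrow> nat \<Rightarrow> nat \<Rightarrow> nat" where
  "m_edges E i j = card {e \<in> E. \<exists>u v. e = {u, v} \<and> u \<noteq> v \<and> vdeg E u = i \<and> vdeg E v = j}"

definition deg_index :: "real \<Rightarrow> real \<Rightarrow> real \<Rightarrow> real \<Rightarrow> real \<Rightarrow> 'a set set \<Rightarrow> real" where
  "deg_index c12 c13 c22 c23 c33 E =
     c12 * m_edges E 1 2 + c13 * m_edges E 1 3 + c22 * m_edges E 2 2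
     + c23 * m_edges E 2 3 + c33 * m_edges E 3 3"

definition path_V :: "nat \<Rightarrow> nat set" where
  "path_V n = {0..<n}"

definition path_E :: "nat \<Rightarrow> nat set set" where
  "path_E n = {{i, Suc i} | i. Suc i < n}"

definition graph_iso :: "'a set \<Rightarrow> 'a set set \<Rightarrow> 'b set \<Rightarrow> 'b set set \<Rightarrow> bool" where
  "graph_iso V1 E1 V2 E2 \<longleftrightarrow> (\<exists>f. bij_betw f V1 V2 \<and>
     (\<forall>u\<in>V1. \<forall>v\<in>V1. {u, v} \<in> E1 \<longleftrightarrow> {f u, f v} \<in> E2))"

end

theory Submission
  imports Defs
begin


definition is_tree :: "'a set \<Rightarrow> 'a set set \<Rightarrow> bool" where
  "is_tree V E \<longleftrightarrow> simple_graph V E \<and> graph_connected V E \<and> card E + 1 = card V"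

lemma sg_edge: "simple_graph V E \<Longrightarrow> e \<in> E \<Longrightarrow> \<exists>u v. e = {u, v} \<and> u \<noteq> v \<and> u \<in> V \<and> v \<in> V"
  by (simp add: simple_graph_def)

lemma sg_sub: "simple_graph V E \<Longrightarrow> e \<in> E \<Longrightarrow> e \<subseteq> V"
  using sg_edge by fastforce

lemma sg_finE: "simple_graph V E \<Longrightarrow> finite E"
proof -
  assume a: "simple_graph V E"
  have "E \<subseteq> Pow V" using sg_sub[OF a] by blast
  moreover have "finite V" using a by (simp add: simple_graph_def)
  ultimately show ?thesis by (meson finite_Pow_iff rev_finite_subset)
qed

lemma sg_finV: "simple_graph V E \<Longrightarrow> finite V"
  by (simp add: simple_graph_def)

lemma sg_fin_edge: "simple_graph V E \<Longrightarrow> e \<in> E \<Longrightarrow> finite e"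
  using sg_edge by fastforce

lemma adj_iff[simp]: "(u, v) \<in> adj_rel E \<longleftrightarrow> {u, v} \<in> E"
  by (simp add: adj_rel_def)

lemma double_count:
  assumes "simple_graph V E"
  shows "(\<Sum>e\<in>E. card {x\<in>e. P x}) = (\<Sum>v\<in>{v\<in>V. P v}. vdeg E v)"
proof -
  have fE: "finite E" using sg_finE[OF assms] .
  have fV: "finite V" using sg_finV[OF assms] .
  have 1: "card {x\<in>e. P x} = (\<Sum>v\<in>V. if v \<in> e \<and> P v then 1 else 0)" if "e \<in> E" for e
  proof -
    have "{x\<in>e. P x} = {v\<in>V. v \<in> e \<and> P v}" using sg_sub[OF assms that] by blast
    thus ?thesis using fV by (simp add: sum.inter_filter[symmetric])
  qed
  have 2: "vdeg E v = (\<Sum>e\<in>E. if v \<in> e then 1 else 0)" for v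
    unfolding vdeg_def using fE by (simp add: sum.inter_filter[symmetric])
  have "(\<Sum>e\<in>E. card {x\<in>e. P x}) = (\<Sum>e\<in>E. \<Sum>v\<in>V. if v \<in> e \<and> P v then 1 else 0)"
    using 1 by (rule sum.cong[OF refl])
  also have "\<dots> = (\<Sum>v\<in>V. \<Sum>e\<in>E. if v \<in> e \<and> P v then 1 else 0)" by (rule sum.swap)
  also have "\<dots> = (\<Sum>v\<in>V. if P v then vdeg E v else 0)"
    by (rule sum.cong[OF refl]) (auto simp: 2)
  also have "\<dots> = (\<Sum>v\<in>{v\<in>V. P v}. vdeg E v)" using fV by (simp add: sum.inter_filter)
  finally show ?thesis .
qed

lemma handshake:
  assumes "simple_graph V E"
  shows "(\<Sum>v\<in>V. vdeg E v) = 2 * card E"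
proof -
  have "(\<Sum>e\<in>E. card {x\<in>e. True}) = (\<Sum>e\<in>E. 2)"
  proof (rule sum.cong[OF refl])
    fix e assume "e \<in> E"
    then obtain u v where "e = {u,v}" "u \<noteq> v" using sg_edge[OF assms] by blast
    moreover have "{x\<in>e. True} = e" by simp
    ultimately show "card {x\<in>e. True} = 2" by simp
  qed
  thus ?thesis using double_count[OF assms, of "\<lambda>_. True"] by simp
qed

lemma deg_pos:
  assumes "simple_graph V E" "graph_connected V E" "v \<in> V" "2 \<le> card V"
  shows "1 \<le> vdeg E v"
proof -
  obtain u where u: "u \<in> V" "u \<noteq> v"
  proof -
    have "V - {v} \<noteq> {}" using assms(4) assms(3) 
      by (metis Diff_empty Diff_insert0 card_1_singleton_iff insert_Diff not_less_eq_eq numeral_2_eq_2 order_refl insertI1 card.empty le_zero_eq)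
    thus ?thesis using that by blast
  qed
  have "(v, u) \<in> (adj_rel E)\<^sup>*" using assms(2,3) u unfolding graph_connected_def by blast
  then obtain y where "(v, y) \<in> adj_rel E" using u(2) by (metis converse_rtranclE)
  hence "{v, y} \<in> {e\<in>E. v \<in> e}" by simp
  moreover have "finite {e\<in>E. v \<in> e}" using sg_finE[OF assms(1)] by simp
  ultimately show ?thesis unfolding vdeg_def by (metis One_nat_def Suc_leI card_gt_0_iff empty_iff)
qed

lemma leaf_remove:
  assumes t: "is_tree V E" and v: "v \<in> V" "vdeg E v = 1"
  obtains w where "w \<in> V" "w \<noteq> v" "{v,w} \<in> E" "{e\<in>E. v\<in>e} = {{v,w}}"
    "is_tree (V - {v}) (E - {{v,w}})"
    "\<And>x. x \<noteq> v \<Longrightarrow> x \<noteq> w \<Longrightarrow> vdeg (E - {{v,w}}) x = vdeg E x"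
    "vdeg (E - {{v,w}}) w = vdeg E w - 1"
    "\<And>x. vdeg (E - {{v,w}}) x \<le> vdeg E x"
    "\<And>e. e \<in> E - {{v,w}} \<Longrightarrow> v \<notin> e"
proof -
  have sg: "simple_graph V E" and con: "graph_connected V E" and ce: "card E + 1 = card V"
    using t by (auto simp: is_tree_def)
  have fE: "finite E" using sg_finE[OF sg] .
  obtain e0 where e0: "{e\<in>E. v\<in>e} = {e0}" using v(2) unfolding vdeg_def
    by (metis One_nat_def card_1_singleton_iff)
  hence "e0 \<in> E" "v \<in> e0" by auto
  then obtain a b where ab: "e0 = {a,b}" "a \<noteq> b" "a \<in> V" "b \<in> V" using sg_edge[OF sg] by blast
  obtain w where w: "e0 = {v,w}" "w \<noteq> v" "w \<in> V"
    using ab \<open>v \<in> e0\<close> by (metis doubleton_eq_iff insert_iff singletonD)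
  have only: "\<And>e. e \<in> E \<Longrightarrow> v \<in> e \<Longrightarrow> e = {v,w}" using e0 w(1) by blast
  have vE: "{v,w} \<in> E" using \<open>e0 \<in> E\<close> w(1) by simp
  define E' where "E' = E - {{v,w}}"
  have nv: "v \<notin> e" if "e \<in> E'" for e using only that unfolding E'_def by blast
  have dle: "vdeg E' x \<le> vdeg E x" for x
    unfolding vdeg_def E'_def by (rule card_mono) (use fE in auto)
  have dsame: "vdeg E' x = vdeg E x" if "x \<noteq> v" "x \<noteq> w" for x
  proof -
    have "{e\<in>E'. x\<in>e} = {e\<in>E. x\<in>e}" using that unfolding E'_def by auto
    thus ?thesis unfolding vdeg_def by simp
  qed
  have dw: "vdeg E' w = vdeg E w - 1"
  proof -
    have "{e\<in>E'. w\<in>e} = {e\<in>E. w\<in>e} - {{v,w}}" unfolding E'_def by auto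
    moreover have "{v,w} \<in> {e\<in>E. w\<in>e}" using vE by simp
    ultimately show ?thesis unfolding vdeg_def using fE by (simp add: card_Diff_singleton)
  qed
  have sg': "simple_graph (V - {v}) E'"
    unfolding simple_graph_def
  proof (intro conjI ballI)
    show "finite (V - {v})" using sg_finV[OF sg] by simp
  next
    fix e assume "e \<in> E'"
    hence "e \<in> E" "v \<notin> e" using nv unfolding E'_def by auto
    thus "\<exists>u v'. e = {u, v'} \<and> u \<noteq> v' \<and> u \<in> V - {v} \<and> v' \<in> V - {v}"
      using sg_edge[OF sg] by fastforce
  qed
  have reach: "(x \<noteq> v \<longrightarrow> (u, x) \<in> (adj_rel E')\<^sup>*) \<and> (x = v \<longrightarrow> (u, w) \<in> (adj_rel E')\<^sup>*)"
    if "(u, x) \<in> (adj_rel E)\<^sup>*" "u \<noteq> v" for u x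
    using that(1)
  proof (induction rule: rtrancl_induct)
    case base
    then show ?case using that(2) by simp
  next
    case (step y z)
    have yz: "{y,z} \<in> E" using step(2) by simp
    show ?case
    proof (cases "z = v")
      case True
      hence "{y,z} = {v,w}" using only[OF yz] by simp
      hence "y = w" using True w(2) by (metis doubleton_eq_iff)
      then show ?thesis using step(3) True w(2) by simp
    next
      case zv: False
      show ?thesis
      proof (cases "y = v")
        case True
        hence "{y,z} = {v,w}" using only[OF yz] by simp
        hence "z = w" using True by (metis doubleton_eq_iff)
        then show ?thesis using step(3) True zv by simp
      next
        case False
        hence "{y,z} \<in> E'" unfolding E'_def using yz zv by (auto simp: doubleton_eq_iff)
        hence "(y,z) \<in> adj_rel E'" by simp
        then show ?thesis using step(3) False zv by (meson rtrancl.rtrancl_into_rtrancl)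
      qed
    qed
  qed
  have con': "graph_connected (V - {v}) E'"
    unfolding graph_connected_def
  proof (intro ballI)
    fix x y assume "x \<in> V - {v}" "y \<in> V - {v}"
    hence "(x,y) \<in> (adj_rel E)\<^sup>*" "x \<noteq> v" "y \<noteq> v" using con unfolding graph_connected_def by auto
    thus "(x,y) \<in> (adj_rel E')\<^sup>*" using reach by blast
  qed
  have "card E' = card E - 1" unfolding E'_def using vE fE by (simp add: card_Diff_singleton)
  moreover have "card (V - {v}) = card V - 1" using v(1) by simp
  moreover have "card E \<ge> 1" using vE fE by (metis One_nat_def Suc_leI card_gt_0_iff empty_iff)
  ultimately have "card E' + 1 = card (V - {v})" using ce by simp
  hence "is_tree (V - {v}) E'" using sg' con' by (simp add: is_tree_def)
  thus ?thesis using that[of w] w vE e0 dsame dw dle nv unfolding E'_def by auto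
qed

lemma tree_leaf:
  assumes t: "is_tree V E" and "2 \<le> card V"
  shows "\<exists>v\<in>V. vdeg E v = 1"
proof (rule ccontr)
  assume nl: "\<not> (\<exists>v\<in>V. vdeg E v = 1)"
  have sg: "simple_graph V E" and con: "graph_connected V E" and ce: "card E + 1 = card V"
    using t by (auto simp: is_tree_def)
  have "\<forall>v\<in>V. 2 \<le> vdeg E v" using deg_pos[OF sg con _ assms(2)] nl
    by (metis One_nat_def Suc_1 not_less_eq_eq le_antisym)
  hence "(\<Sum>v\<in>V. 2) \<le> (\<Sum>v\<in>V. vdeg E v)" by (meson sum_mono)
  hence "2 * card V \<le> 2 * card E" using handshake[OF sg] by simp
  thus False using ce by simp
qed

lemma path_E_mem: "X \<in> path_E n \<longleftrightarrow> (\<exists>i. X = {i, Suc i} \<and> Suc i < n)"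
  by (auto simp: path_E_def)

lemma pe_single: "{a} \<notin> path_E n"
proof
  assume "{a} \<in> path_E n"
  then obtain i where eq: "{a} = {i, Suc i}" unfolding path_E_mem by blast
  have "i \<in> {a}" "Suc i \<in> {a}" unfolding eq by simp_all
  thus False by simp
qed

lemma pe_single2: "{a, a} \<notin> path_E n"
  using pe_single by simp

lemma pe0: "Suc a < n \<Longrightarrow> {0, Suc a} \<in> path_E n \<longleftrightarrow> a = 0"
proof
  assume "{0, Suc a} \<in> path_E n"
  then obtain i where eq: "{0, Suc a} = {i, Suc i}" unfolding path_E_mem by blast
  have "0 \<in> {i, Suc i}" unfolding eq[symmetric] by simp
  hence i0: "i = 0" by simp
  have "Suc a \<in> {i, Suc i}" unfolding eq[symmetric] by simp
  thus "a = 0" using i0 by simp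
next
  assume "Suc a < n" "a = 0"
  thus "{0, Suc a} \<in> path_E n" unfolding path_E_mem by blast
qed

lemma pe0': "Suc a < n \<Longrightarrow> {Suc a, 0} \<in> path_E n \<longleftrightarrow> a = 0"
  using pe0 by (simp add: insert_commute)

lemma pe_suc: "{Suc a, Suc b} \<in> path_E n \<longleftrightarrow> {a, b} \<in> path_E (n - 1)"
proof
  assume "{Suc a, Suc b} \<in> path_E n"
  then obtain i where i: "{Suc a, Suc b} = {i, Suc i}" "Suc i < n" unfolding path_E_mem by blast
  have "i \<in> {Suc a, Suc b}" unfolding i(1) by simp
  then obtain j where ij: "i = Suc j" by blast
  have "{Suc a, Suc b} = Suc ` {a, b}" "{i, Suc i} = Suc ` {j, Suc j}" using ij by simp_all
  hence "Suc ` {a, b} = Suc ` {j, Suc j}" using i(1) by simp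
  hence "{a, b} = {j, Suc j}" by (rule inj_image_eq_iff[OF inj_Suc, THEN iffD1])
  moreover have "Suc j < n - 1" using i(2) ij by simp
  ultimately show "{a, b} \<in> path_E (n - 1)" unfolding path_E_mem by blast
next
  assume "{a, b} \<in> path_E (n - 1)"
  then obtain i where i: "{a, b} = {i, Suc i}" "Suc i < n - 1" unfolding path_E_mem by blast
  have "{Suc a, Suc b} = Suc ` {a, b}" by simp
  also have "\<dots> = {Suc i, Suc (Suc i)}" unfolding i(1) by simp
  finally have "{Suc a, Suc b} = {Suc i, Suc (Suc i)}" .
  moreover have "Suc (Suc i) < n" using i(2) by simp
  ultimately show "{Suc a, Suc b} \<in> path_E n" unfolding path_E_mem by blast
qed




lemma tree_sub_edges_aux:
  "card V = k \<Longrightarrow> is_tree V E \<Longrightarrow> S \<subseteq> V \<Longrightarrow> S \<noteq> {} \<Longrightarrow> card {e\<in>E. e \<subseteq> S} + 1 \<le> card S"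
proof (induction k arbitrary: V E S)
  case 0
  then show ?case by (simp add: is_tree_def)
next
  case (Suc k)
  have sg: "simple_graph V E" using Suc.prems(2) by (simp add: is_tree_def)
  have fV: "finite V" using sg_finV[OF sg] .
  have fS: "finite S" using Suc.prems(3) fV finite_subset by blast
  have noedge: "{e\<in>E. e \<subseteq> {x}} = {}" for x
  proof -
    have "\<not> e \<subseteq> {x}" if "e \<in> E" for e using sg_edge[OF sg that] by auto
    thus ?thesis by auto
  qed
  show ?case
  proof (cases "card V = 1")
    case True
    then obtain x where "V = {x}" by (metis card_1_singleton_iff One_nat_def)
    hence "S = {x}" using Suc.prems(3,4) by auto
    then show ?thesis using noedge by simp
  next
    case False
    hence c2: "2 \<le> card V" using Suc.prems(1) by simp
    obtain v where v: "v \<in> V" "vdeg E v = 1" using tree_leaf[OF Suc.prems(2) c2] by blast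
    obtain w where w: "w \<in> V" "w \<noteq> v" "{v,w} \<in> E" "{e\<in>E. v\<in>e} = {{v,w}}"
      "is_tree (V - {v}) (E - {{v,w}})"
      "\<And>x. x \<noteq> v \<Longrightarrow> x \<noteq> w \<Longrightarrow> vdeg (E - {{v,w}}) x = vdeg E x"
      "vdeg (E - {{v,w}}) w = vdeg E w - 1"
      "\<And>x. vdeg (E - {{v,w}}) x \<le> vdeg E x"
      "\<And>e. e \<in> E - {{v,w}} \<Longrightarrow> v \<notin> e"
      using leaf_remove[OF Suc.prems(2) v] by blast
    have cV': "card (V - {v}) = k" using Suc.prems(1) v(1) by simp
    have fE: "finite E" using sg_finE[OF sg] .
    show ?thesis
    proof (cases "v \<in> S")
      case False
      hence "{e\<in>E. e \<subseteq> S} = {e\<in>E - {{v,w}}. e \<subseteq> S}" by auto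
      moreover have "S \<subseteq> V - {v}" using False Suc.prems(3) by auto
      ultimately show ?thesis using Suc.IH[OF cV' w(5) _ Suc.prems(4)] by simp
    next
      case True
      show ?thesis
      proof (cases "S = {v}")
        case True
        then show ?thesis using noedge by simp
      next
        case False
        hence ne: "S - {v} \<noteq> {}" using True by auto
        have sub: "S - {v} \<subseteq> V - {v}" using Suc.prems(3) by auto
        have "{e\<in>E. e \<subseteq> S} \<subseteq> insert {v,w} {e\<in>E - {{v,w}}. e \<subseteq> S - {v}}"
          using w(9) by blast
        hence "card {e\<in>E. e \<subseteq> S} \<le> card (insert {v,w} {e\<in>E - {{v,w}}. e \<subseteq> S - {v}})"
          by (rule card_mono[rotated]) (use fE in simp)
        also have "\<dots> \<le> card {e\<in>E - {{v,w}}. e \<subseteq> S - {v}} + 1"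
          by (simp add: card_insert_le_m1 card_insert_if fE)
        also have "\<dots> \<le> card (S - {v})" using Suc.IH[OF cV' w(5) sub ne] by simp
        finally have calc: "card {e\<in>E. e \<subseteq> S} \<le> card (S - {v})" .
        have "card (S - {v}) = card S - 1" using True fS by simp
        moreover have "card S > 0" using True fS card_gt_0_iff by blast
        ultimately show ?thesis using calc by linarith
      qed
    qed
  qed
qed

lemma tree_sub_edges:
  "is_tree V E \<Longrightarrow> S \<subseteq> V \<Longrightarrow> S \<noteq> {} \<Longrightarrow> card {e\<in>E. e \<subseteq> S} + 1 \<le> card S"
  using tree_sub_edges_aux by blast

lemma path_iso_aux:
  "card V = k \<Longrightarrow> is_tree V E \<Longrightarrow> \<forall>x\<in>V. vdeg E x \<le> 2 \<Longrightarrow> v \<in> V \<Longrightarrow> vdeg E v \<le> 1 \<Longrightarrow>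
   \<exists>f. bij_betw f V {0..<k} \<and> f v = 0 \<and> (\<forall>x\<in>V. \<forall>y\<in>V. {x,y} \<in> E \<longleftrightarrow> {f x, f y} \<in> path_E k)"
proof (induction k arbitrary: V E v)
  case 0
  then show ?case by (simp add: is_tree_def)
next
  case (Suc k)
  have sg: "simple_graph V E" and con: "graph_connected V E"
    using Suc.prems(2) by (auto simp: is_tree_def)
  show ?case
  proof (cases "k = 0")
    case True
    hence V: "V = {v}" using Suc.prems(1,4) by (metis One_nat_def card_1_singleton_iff singletonD)
    have "{v,v} \<notin> E" using sg_edge[OF sg] by fastforce
    hence "bij_betw (\<lambda>_. 0::nat) V {0..<Suc k} \<and> (\<lambda>_. 0::nat) v = 0 \<and>
      (\<forall>x\<in>V. \<forall>y\<in>V. {x,y} \<in> E \<longleftrightarrow> {(\<lambda>_. 0::nat) x, (\<lambda>_. 0::nat) y} \<in> path_E (Suc k))"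
      using True V by (simp add: bij_betw_def pe_single)
    then show ?thesis by blast
  next
    case False
    hence c2: "2 \<le> card V" using Suc.prems(1) by simp
    have "1 \<le> vdeg E v" using deg_pos[OF sg con Suc.prems(4) c2] .
    hence v1: "vdeg E v = 1" using Suc.prems(5) by simp
    obtain w where w: "w \<in> V" "w \<noteq> v" "{v,w} \<in> E" "{e\<in>E. v\<in>e} = {{v,w}}"
      "is_tree (V - {v}) (E - {{v,w}})"
      "\<And>x. x \<noteq> v \<Longrightarrow> x \<noteq> w \<Longrightarrow> vdeg (E - {{v,w}}) x = vdeg E x"
      "vdeg (E - {{v,w}}) w = vdeg E w - 1"
      "\<And>x. vdeg (E - {{v,w}}) x \<le> vdeg E x"
      "\<And>e. e \<in> E - {{v,w}} \<Longrightarrow> v \<notin> e"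
      using leaf_remove[OF Suc.prems(2) Suc.prems(4) v1] by blast
    have cV': "card (V - {v}) = k" using Suc.prems(1,4) by simp
    have d2: "\<forall>x\<in>V - {v}. vdeg (E - {{v,w}}) x \<le> 2" using w(8) Suc.prems(3) le_trans by blast
    have dw: "vdeg (E - {{v,w}}) w \<le> 1" using w(7) Suc.prems(3) w(1) by fastforce
    obtain g where g: "bij_betw g (V - {v}) {0..<k}" "g w = 0"
      "\<forall>x\<in>V - {v}. \<forall>y\<in>V - {v}. {x,y} \<in> E - {{v,w}} \<longleftrightarrow> {g x, g y} \<in> path_E k"
      using Suc.IH[OF cV' w(5) d2 _ dw] w(1,2) by blast
    define f where "f x = (if x = v then 0 else Suc (g x))" for x
    have gin: "g x < k" if "x \<in> V - {v}" for x using g(1) that by (auto simp: bij_betw_def)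
    have ginj: "inj_on g (V - {v})" using g(1) by (simp add: bij_betw_def)
    have bij: "bij_betw f V {0..<Suc k}"
    proof -
      have Vi: "V = insert v (V - {v})" using Suc.prems(4) by blast
      have "inj_on f V"
      proof (rule inj_onI)
        fix x y assume "x \<in> V" "y \<in> V" "f x = f y"
        thus "x = y" using ginj unfolding f_def by (auto split: if_splits dest: inj_onD)
      qed
      moreover have "f ` V = {0..<Suc k}"
      proof
        show "f ` V \<subseteq> {0..<Suc k}" using gin by (auto simp: f_def)
      next
        show "{0..<Suc k} \<subseteq> f ` V"
        proof
          fix i assume "i \<in> {0..<Suc k}"
          show "i \<in> f ` V"
          proof (cases i)
            case 0
            then show ?thesis using Suc.prems(4) f_def by force
          next
            case (Suc j)
            hence "j \<in> g ` (V - {v})" using g(1) \<open>i \<in> {0..<Suc k}\<close> by (auto simp: bij_betw_def)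
            then obtain x where "x \<in> V - {v}" "g x = j" by blast
            hence "f x = i" using Suc f_def by simp
            thus ?thesis using \<open>x \<in> V - {v}\<close> by blast
          qed
        qed
      qed
      ultimately show ?thesis by (simp add: bij_betw_def)
    qed
    have vv: "{v,v} \<notin> E" using sg_edge[OF sg] by fastforce
    have vy: "{v,y} \<in> E \<longleftrightarrow> y = w" if "y \<in> V" for y
    proof
      assume "{v,y} \<in> E"
      hence "{v,y} \<in> {e\<in>E. v\<in>e}" by simp
      hence "{v,y} = {v,w}" using w(4) by simp
      thus "y = w" using w(2) by (simp add: doubleton_eq_iff)
    next
      assume "y = w" thus "{v,y} \<in> E" using w(3) by simp
    qed
    have edges: "{x,y} \<in> E \<longleftrightarrow> {f x, f y} \<in> path_E (Suc k)" if "x \<in> V" "y \<in> V" for x y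
    proof (cases "x = v")
      case xv: True
      show ?thesis
      proof (cases "y = v")
        case True
        then show ?thesis using xv vv by (simp add: f_def pe_single)
      next
        case False
        hence "Suc (g y) < Suc k" using gin that by simp
        hence "{f x, f y} \<in> path_E (Suc k) \<longleftrightarrow> g y = 0" using xv False by (simp add: f_def pe0)
        also have "\<dots> \<longleftrightarrow> y = w" using ginj g(2) that False w(1,2) by (metis DiffI inj_onD singletonD)
        finally show ?thesis using vy[OF that(2)] xv by simp
      qed
    next
      case xv: False
      show ?thesis
      proof (cases "y = v")
        case True
        hence "Suc (g x) < Suc k" using gin that xv by simp
        hence "{f x, f y} \<in> path_E (Suc k) \<longleftrightarrow> g x = 0" using xv True by (simp add: f_def pe0')
        also have "\<dots> \<longleftrightarrow> x = w" using ginj g(2) that xv w(1,2) by (metis DiffI inj_onD singletonD)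
        finally show ?thesis using vy[OF that(1)] True by (simp add: insert_commute)
      next
        case False
        have "{x,y} \<noteq> {v,w}" using xv False by (auto simp: doubleton_eq_iff)
        hence "{x,y} \<in> E \<longleftrightarrow> {x,y} \<in> E - {{v,w}}" by simp
        also have "\<dots> \<longleftrightarrow> {g x, g y} \<in> path_E k" using g(3) that xv False by simp
        also have "\<dots> \<longleftrightarrow> {f x, f y} \<in> path_E (Suc k)" using xv False by (simp add: f_def pe_suc)
        finally show ?thesis .
      qed
    qed
    show ?thesis using bij edges f_def by auto
  qed
qed




lemma path_sg: "simple_graph (path_V n) (path_E n)"
  unfolding simple_graph_def path_V_def
proof (intro conjI ballI)
  fix e assume "e \<in> path_E n"
  then obtain i where "e = {i, Suc i}" "Suc i < n" unfolding path_E_mem by blast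
  hence "e = {i, Suc i} \<and> i \<noteq> Suc i \<and> i \<in> {0..<n} \<and> Suc i \<in> {0..<n}" by simp
  thus "\<exists>u v. e = {u, v} \<and> u \<noteq> v \<and> u \<in> {0..<n} \<and> v \<in> {0..<n}" by blast
qed simp

lemma path_adj_step: "Suc k < n \<Longrightarrow> (k, Suc k) \<in> adj_rel (path_E n)"
  unfolding adj_iff path_E_mem by blast

lemma path_reach0: "k < n \<Longrightarrow> (0, k) \<in> (adj_rel (path_E n))\<^sup>*"
proof (induction k)
  case 0 show ?case by simp
next
  case (Suc k)
  hence "(0, k) \<in> (adj_rel (path_E n))\<^sup>*" by simp
  thus ?case using path_adj_step[OF Suc.prems] by (meson rtrancl.rtrancl_into_rtrancl)
qed

lemma adj_sym: "sym (adj_rel E)"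
  unfolding sym_def adj_iff by (simp add: insert_commute)

lemma path_con: "graph_connected (path_V n) (path_E n)"
  unfolding graph_connected_def path_V_def
proof (intro ballI)
  fix u v assume "u \<in> {0..<n}" "v \<in> {0..<n}"
  hence a: "(0, u) \<in> (adj_rel (path_E n))\<^sup>*" "(0, v) \<in> (adj_rel (path_E n))\<^sup>*"
    using path_reach0 by auto
  have "(u, 0) \<in> (adj_rel (path_E n))\<^sup>*" using a(1) sym_rtrancl[OF adj_sym] by (meson symD)
  thus "(u, v) \<in> (adj_rel (path_E n))\<^sup>*" using a(2) by (meson rtrancl_trans)
qed

lemma path_card_E: "card (path_E n) = n - 1"
proof -
  have eq: "path_E n = (\<lambda>i. {i, Suc i}) ` {0..<n-1}"
    unfolding path_E_def by auto
  have "inj_on (\<lambda>i. {i, Suc i}) {0..<n-1}"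
    by (rule inj_onI) (auto simp: doubleton_eq_iff)
  thus ?thesis unfolding eq by (simp add: card_image)
qed

lemma path_deg: "vdeg (path_E n) i \<le> 2"
proof -
  have fin: "finite {{i - 1, i}, {i, Suc i}}" by simp
  have "{e\<in>path_E n. i \<in> e} \<subseteq> {{i - 1, i}, {i, Suc i}}"
  proof
    fix e assume "e \<in> {e\<in>path_E n. i \<in> e}"
    then obtain j where "e = {j, Suc j}" "i \<in> e" unfolding path_E_mem by blast
    thus "e \<in> {{i - 1, i}, {i, Suc i}}" by auto
  qed
  hence "vdeg (path_E n) i \<le> card {{i - 1, i}, {i, Suc i}}"
    unfolding vdeg_def using card_mono[OF fin] by blast
  also have "\<dots> \<le> 2" by (simp add: card_insert_if)
  finally show ?thesis .
qed

lemma path_chem: "chem_graph n (n - 1) (path_V n) (path_E n)"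
proof -
  have "\<forall>v\<in>path_V n. vdeg (path_E n) v \<le> 3" using path_deg le_trans by (metis eval_nat_numeral(3) le_SucI)
  thus ?thesis using path_sg path_con path_card_E by (simp add: path_V_def chem_graph_def)
qed




definition Pe :: "'a set set \<Rightarrow> nat \<Rightarrow> nat \<Rightarrow> 'a set \<Rightarrow> bool" where
  "Pe E i j e \<longleftrightarrow> (\<exists>u v. e = {u, v} \<and> u \<noteq> v \<and> vdeg E u = i \<and> vdeg E v = j)"

definition Ind :: "'a set set \<Rightarrow> nat \<Rightarrow> nat \<Rightarrow> 'a set \<Rightarrow> nat" where
  "Ind E i j e = (if Pe E i j e then 1 else 0)"

lemma m_edges_sum: "finite E \<Longrightarrow> m_edges E i j = (\<Sum>e\<in>E. Ind E i j e)"
  unfolding m_edges_def Ind_def Pe_def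
  by (simp add: sum.inter_filter[symmetric])

lemma Pe_pair: "u \<noteq> v \<Longrightarrow> Pe E i j {u, v} \<longleftrightarrow>
   (vdeg E u = i \<and> vdeg E v = j) \<or> (vdeg E u = j \<and> vdeg E v = i)"
  unfolding Pe_def by (auto simp: doubleton_eq_iff)

lemma card_pair_filter: "u \<noteq> v \<Longrightarrow> card {x\<in>{u,v}. P x} = (if P u then 1 else 0) + (if P v then 1 else 0)"
proof -
  assume uv: "u \<noteq> v"
  have "{x\<in>{u,v}. P x} = (if P u \<and> P v then {u,v} else if P u then {u} else if P v then {v} else {})" by auto
  thus ?thesis using uv by simp
qed

lemma no11:
  assumes sg: "simple_graph V E" and con: "graph_connected V E" and c3: "3 \<le> card V"
    and e: "{u, v} \<in> E" "u \<noteq> v" and du: "vdeg E u = 1" and dv: "vdeg E v = 1"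
  shows False
proof -
  have fE: "finite E" using sg_finE[OF sg] .
  have one: "{e\<in>E. x \<in> e} = {{u,v}}" if x1: "x \<in> {u,v}" and x2: "vdeg E x = 1" for x
  proof -
    obtain e0 where "{e\<in>E. x \<in> e} = {e0}" using x2 unfolding vdeg_def
      by (metis One_nat_def card_1_singleton_iff)
    moreover have "{u,v} \<in> {e\<in>E. x \<in> e}" using e(1) x1 by auto
    ultimately show ?thesis by auto
  qed
  have reach: "x \<in> {u,v}" if "(u, x) \<in> (adj_rel E)\<^sup>*" for x
    using that
  proof (induction rule: rtrancl_induct)
    case base then show ?case by simp
  next
    case (step y z)
    have "{y,z} \<in> E" using step(2) by simp
    moreover have "vdeg E y = 1" using step(3) du dv by auto
    ultimately have "{y,z} \<in> {e\<in>E. y \<in> e}" by simp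
    hence "{y,z} = {u,v}" using one[OF step(3) \<open>vdeg E y = 1\<close>] by simp
    thus ?case by (metis insertI1 insert_commute)
  qed
  have "u \<in> V" using sg_edge[OF sg e(1)] by (auto simp: doubleton_eq_iff)
  hence "V \<subseteq> {u,v}" using reach con unfolding graph_connected_def by blast
  hence "card V \<le> card {u,v}" by (simp add: card_mono)
  also have "\<dots> \<le> 2" by (simp add: card_insert_if)
  finally show False using c3 by simp
qed

lemma sum_deg_class:
  "(\<Sum>v\<in>{v\<in>V. vdeg E v = k}. vdeg E v) = k * card {v\<in>V. vdeg E v = k}"
proof -
  have "(\<Sum>v\<in>{v\<in>V. vdeg E v = k}. vdeg E v) = (\<Sum>v\<in>{v\<in>V. vdeg E v = k}. k)"
    by (rule sum.cong) auto
  thus ?thesis by simp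
qed

lemma counts:
  assumes ch: "chem_graph n (n - 1) V E" and n3: "3 \<le> n"
  shows "m_edges E 1 2 + m_edges E 1 3 = card {v\<in>V. vdeg E v = 1}"
    and "m_edges E 1 2 + 2 * m_edges E 2 2 + m_edges E 2 3 = 2 * card {v\<in>V. vdeg E v = 2}"
    and "m_edges E 1 3 + m_edges E 2 3 + 2 * m_edges E 3 3 = 3 * card {v\<in>V. vdeg E v = 3}"
    and "m_edges E 1 2 + m_edges E 1 3 + m_edges E 2 2 + m_edges E 2 3 + m_edges E 3 3 = n - 1"
    and "card {v\<in>V. vdeg E v = 1} + card {v\<in>V. vdeg E v = 2} + card {v\<in>V. vdeg E v = 3} = n"
    and "1 \<le> card {v\<in>V. vdeg E v = 3} \<Longrightarrow> m_edges E 3 3 + 1 \<le> card {v\<in>V. vdeg E v = 3}"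
proof -
  have sg: "simple_graph V E" and con: "graph_connected V E" and cV: "card V = n"
    and cE: "card E = n - 1" and d3: "\<forall>v\<in>V. vdeg E v \<le> 3"
    using ch by (auto simp: chem_graph_def)
  have fE: "finite E" using sg_finE[OF sg] .
  have fV: "finite V" using sg_finV[OF sg] .
  have dpos: "1 \<le> vdeg E v" if "v \<in> V" for v using deg_pos[OF sg con that] cV n3 by simp
  have dcase: "vdeg E v = 1 \<or> vdeg E v = 2 \<or> vdeg E v = 3" if "v \<in> V" for v
    using dpos[OF that] d3 that by fastforce
  have ecase: "\<exists>u v. e = {u,v} \<and> u \<noteq> v \<and> u \<in> V \<and> v \<in> V \<and> \<not> (vdeg E u = 1 \<and> vdeg E v = 1)"
    if eE: "e \<in> E" for e
  proof -
    obtain u v where uv: "e = {u,v}" "u \<noteq> v" "u \<in> V" "v \<in> V" using sg_edge[OF sg eE] by blast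
    have "\<not> (vdeg E u = 1 \<and> vdeg E v = 1)"
      using no11[OF sg con _ _ uv(2)] eE uv(1) cV n3 by auto
    thus ?thesis using uv by blast
  qed
  have pw: "card {x\<in>e. vdeg E x = 1} = Ind E 1 2 e + Ind E 1 3 e
     \<and> card {x\<in>e. vdeg E x = 2} = Ind E 1 2 e + 2 * Ind E 2 2 e + Ind E 2 3 e
     \<and> card {x\<in>e. vdeg E x = 3} = Ind E 1 3 e + Ind E 2 3 e + 2 * Ind E 3 3 e
     \<and> 1 = Ind E 1 2 e + Ind E 1 3 e + Ind E 2 2 e + Ind E 2 3 e + Ind E 3 3 e
     \<and> (Pe E 3 3 e \<longleftrightarrow> e \<subseteq> {v\<in>V. vdeg E v = 3})"
    if eE: "e \<in> E" for e
  proof -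
    obtain u v where uv: "e = {u,v}" "u \<noteq> v" "u \<in> V" "v \<in> V" "\<not> (vdeg E u = 1 \<and> vdeg E v = 1)"
      using ecase[OF eE] by blast
    define a where "a = vdeg E u"
    define b where "b = vdeg E v"
    have I: "Ind E i j e = (if (a = i \<and> b = j) \<or> (a = j \<and> b = i) then 1 else 0)" for i j
      unfolding Ind_def uv(1) Pe_pair[OF uv(2)] a_def b_def by simp
    have C: "card {x\<in>e. vdeg E x = k} = (if a = k then 1 else 0) + (if b = k then 1 else 0)" for k
      unfolding uv(1) card_pair_filter[OF uv(2)] a_def b_def by simp
    have P: "(Pe E 3 3 e \<longleftrightarrow> e \<subseteq> {v\<in>V. vdeg E v = 3}) \<longleftrightarrow> True"
      unfolding uv(1) Pe_pair[OF uv(2)] using uv(3,4) by auto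
    have ab: "a = 1 \<or> a = 2 \<or> a = 3" "b = 1 \<or> b = 2 \<or> b = 3" "\<not> (a = 1 \<and> b = 1)"
      using dcase[OF uv(3)] dcase[OF uv(4)] uv(5) a_def b_def by auto
    show ?thesis unfolding I C P using ab by (elim disjE; simp)
  qed
  have pw1: "\<And>e. e \<in> E \<Longrightarrow> card {x\<in>e. vdeg E x = 1} = Ind E 1 2 e + Ind E 1 3 e" using pw by blast
  have pw2: "\<And>e. e \<in> E \<Longrightarrow> card {x\<in>e. vdeg E x = 2} = Ind E 1 2 e + 2 * Ind E 2 2 e + Ind E 2 3 e" using pw by blast
  have pw3: "\<And>e. e \<in> E \<Longrightarrow> card {x\<in>e. vdeg E x = 3} = Ind E 1 3 e + Ind E 2 3 e + 2 * Ind E 3 3 e" using pw by blast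
  have pw4: "\<And>e. e \<in> E \<Longrightarrow> Ind E 1 2 e + Ind E 1 3 e + Ind E 2 2 e + Ind E 2 3 e + Ind E 3 3 e = 1" using pw by (metis (no_types))
  have pw5: "\<And>e. e \<in> E \<Longrightarrow> Pe E 3 3 e \<longleftrightarrow> e \<subseteq> {v\<in>V. vdeg E v = 3}" using pw by blast
  have S1: "(\<Sum>e\<in>E. card {x\<in>e. vdeg E x = k}) = k * card {v\<in>V. vdeg E v = k}" for k
    using double_count[OF sg] sum_deg_class by metis
  have "m_edges E 1 2 + m_edges E 1 3 = (\<Sum>e\<in>E. Ind E 1 2 e + Ind E 1 3 e)"
    using fE by (simp add: m_edges_sum sum.distrib)
  also have "\<dots> = (\<Sum>e\<in>E. card {x\<in>e. vdeg E x = 1})" by (intro sum.cong refl) (metis pw1)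
  finally show "m_edges E 1 2 + m_edges E 1 3 = card {v\<in>V. vdeg E v = 1}" using S1[of 1] by simp
  have "m_edges E 1 2 + 2 * m_edges E 2 2 + m_edges E 2 3 = (\<Sum>e\<in>E. Ind E 1 2 e + 2 * Ind E 2 2 e + Ind E 2 3 e)"
    using fE by (simp add: m_edges_sum sum.distrib sum_distrib_left)
  also have "\<dots> = (\<Sum>e\<in>E. card {x\<in>e. vdeg E x = 2})" by (intro sum.cong refl) (metis pw2)
  finally show "m_edges E 1 2 + 2 * m_edges E 2 2 + m_edges E 2 3 = 2 * card {v\<in>V. vdeg E v = 2}" using S1[of 2] by simp
  have "m_edges E 1 3 + m_edges E 2 3 + 2 * m_edges E 3 3 = (\<Sum>e\<in>E. Ind E 1 3 e + Ind E 2 3 e + 2 * Ind E 3 3 e)"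
    using fE by (simp add: m_edges_sum sum.distrib sum_distrib_left)
  also have "\<dots> = (\<Sum>e\<in>E. card {x\<in>e. vdeg E x = 3})" by (intro sum.cong refl) (metis pw3)
  finally show "m_edges E 1 3 + m_edges E 2 3 + 2 * m_edges E 3 3 = 3 * card {v\<in>V. vdeg E v = 3}" using S1[of 3] by simp
  have "m_edges E 1 2 + m_edges E 1 3 + m_edges E 2 2 + m_edges E 2 3 + m_edges E 3 3
     = (\<Sum>e\<in>E. Ind E 1 2 e + Ind E 1 3 e + Ind E 2 2 e + Ind E 2 3 e + Ind E 3 3 e)"
    using fE by (simp add: m_edges_sum sum.distrib)
  also have "\<dots> = (\<Sum>e\<in>E. 1)" by (intro sum.cong refl) (metis pw4)
  finally show "m_edges E 1 2 + m_edges E 1 3 + m_edges E 2 2 + m_edges E 2 3 + m_edges E 3 3 = n - 1"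
    using cE by simp
  have "card V = (\<Sum>v\<in>V. (if vdeg E v = 1 then 1 else 0) + (if vdeg E v = 2 then 1 else 0) + (if vdeg E v = 3 then 1 else 0))"
    unfolding card_eq_sum
  proof (intro sum.cong refl)
    fix v assume "v \<in> V"
    thus "1 = (if vdeg E v = 1 then 1 else 0) + (if vdeg E v = 2 then 1 else 0) + (if vdeg E v = 3 then (1::nat) else 0)"
      using dcase[OF \<open>v \<in> V\<close>] by (elim disjE) simp_all
  qed
  also have "\<dots> = card {v\<in>V. vdeg E v = 1} + card {v\<in>V. vdeg E v = 2} + card {v\<in>V. vdeg E v = 3}"
    using fV by (simp add: sum.distrib sum.inter_filter[symmetric])
  finally show "card {v\<in>V. vdeg E v = 1} + card {v\<in>V. vdeg E v = 2} + card {v\<in>V. vdeg E v = 3} = n"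
    using cV by simp
  assume "1 \<le> card {v\<in>V. vdeg E v = 3}"
  hence ne: "{v\<in>V. vdeg E v = 3} \<noteq> {}" by (metis card.empty not_one_le_zero)
  have tr: "is_tree V E" using sg con cV cE n3 by (simp add: is_tree_def)
  have "m_edges E 3 3 = card {e\<in>E. e \<subseteq> {v\<in>V. vdeg E v = 3}}"
  proof -
    have "m_edges E 3 3 = card {e\<in>E. Pe E 3 3 e}" unfolding m_edges_def Pe_def by (rule refl)
    also have "{e\<in>E. Pe E 3 3 e} = {e\<in>E. e \<subseteq> {v\<in>V. vdeg E v = 3}}" using pw5 by blast
    finally show ?thesis .
  qed
  thus "m_edges E 3 3 + 1 \<le> card {v\<in>V. vdeg E v = 3}"
    using tree_sub_edges[OF tr _ ne] by simp
qed




lemma tree_index: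
  fixes c12 c13 c22 c23 c33 :: real
  assumes ch: "chem_graph n (n - 1) V E" and n3: "3 \<le> n"
    and hB: "c13 - 3*c22 + 2*c23 > c12 - 4*c22 + 3*c23"
    and hA: "c12 - 4*c22 + 3*c23 > - (c22 - 2*c23 + c33)"
    and hC: "- (c22 - 2*c23 + c33) > 0"
  shows "(card {v\<in>V. vdeg E v = 3} = 0 \<longrightarrow> deg_index c12 c13 c22 c23 c33 E = 2*c12 + (real n - 3)*c22)
    \<and> (card {v\<in>V. vdeg E v = 3} \<noteq> 0 \<longrightarrow> deg_index c12 c13 c22 c23 c33 E > 2*c12 + (real n - 3)*c22)"
proof -
  define a where "a = real (m_edges E 1 2)"
  define b where "b = real (m_edges E 1 3)"
  define p where "p = real (m_edges E 2 2)"
  define q where "q = real (m_edges E 2 3)"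
  define r where "r = real (m_edges E 3 3)"
  define N1 where "N1 = real (card {v\<in>V. vdeg E v = 1})"
  define N2 where "N2 = real (card {v\<in>V. vdeg E v = 2})"
  define N3 where "N3 = real (card {v\<in>V. vdeg E v = 3})"
  note C = counts[OF ch n3]
  have e1: "a + b = N1" using C(1) unfolding a_def b_def N1_def by (metis of_nat_add)
  have e2: "a + 2*p + q = 2*N2" using arg_cong[OF C(2), of real] unfolding a_def p_def q_def N2_def by simp
  have e3: "b + q + 2*r = 3*N3" using arg_cong[OF C(3), of real] unfolding b_def q_def r_def N3_def by simp
  have e4: "a + b + p + q + r = real n - 1" using arg_cong[OF C(4), of real] n3 unfolding a_def b_def p_def q_def r_def by simp
  have e5: "N1 + N2 + N3 = real n" using arg_cong[OF C(5), of real] unfolding N1_def N2_def N3_def by simp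
  have nn: "a \<ge> 0" "b \<ge> 0" "p \<ge> 0" "q \<ge> 0" "r \<ge> 0" "N3 \<ge> 0"
    unfolding a_def b_def p_def q_def r_def N3_def by simp_all
  have hq: "q = 3*a + 2*b - 2*r - 6" using e1 e2 e3 e4 e5 by linarith
  have hp: "p = real n + 5 - 4*a - 3*b + r" using e1 e2 e3 e4 e5 by linarith
  have ab: "a + b = N3 + 2" using e1 e2 e3 e4 e5 by linarith
  define A where "A = c12 - 4*c22 + 3*c23"
  define B where "B = c13 - 3*c22 + 2*c23"
  define Cc where "Cc = - (c22 - 2*c23 + c33)"
  have idx: "deg_index c12 c13 c22 c23 c33 E = 2*c12 + (real n - 3)*c22 + A*(a - 2) + B*b - Cc*r"
  proof -
    have "deg_index c12 c13 c22 c23 c33 E = c12*a + c13*b + c22*p + c23*q + c33*r"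
      unfolding deg_index_def a_def b_def p_def q_def r_def by simp
    also have "\<dots> = 2*c12 + (real n - 3)*c22 + A*(a - 2) + B*b - Cc*r"
      unfolding hp hq A_def B_def Cc_def by (simp add: algebra_simps)
    finally show ?thesis .
  qed
  have AC: "A > Cc" "B > A" "Cc > 0" using hA hB hC unfolding A_def B_def Cc_def by simp_all
  show ?thesis
  proof (intro conjI impI)
    assume z: "card {v\<in>V. vdeg E v = 3} = 0"
    hence "N3 = 0" unfolding N3_def by simp
    hence "b = 0" "r = 0" "a = 2" using e3 hq ab nn by linarith+
    thus "deg_index c12 c13 c22 c23 c33 E = 2*c12 + (real n - 3)*c22" using idx by simp
  next
    assume z: "card {v\<in>V. vdeg E v = 3} \<noteq> 0"
    hence "m_edges E 3 3 + 1 \<le> card {v\<in>V. vdeg E v = 3}" using C(6) by simp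
    hence rb: "r + 1 \<le> N3" unfolding r_def N3_def by (metis of_nat_1 of_nat_add of_nat_le_iff)
    have f1: "(B - A) * b \<ge> 0" using AC nn by simp
    have f2: "Cc * r \<le> Cc * (N3 - 1)" using AC rb by (intro mult_left_mono) simp_all
    have f3: "(A - Cc) * N3 \<ge> 0" using AC nn by simp
    have "A*(a - 2) + B*b - Cc*r = A*N3 + (B - A)*b - Cc*r"
      using ab by (simp add: algebra_simps) (metis ab add_diff_cancel_right' distrib_left)
    also have "\<dots> \<ge> A*N3 - Cc*(N3 - 1)" using f1 f2 by linarith
    finally have "A*(a - 2) + B*b - Cc*r \<ge> (A - Cc)*N3 + Cc" by (simp add: algebra_simps)
    hence "A*(a - 2) + B*b - Cc*r > 0" using f3 AC by linarith
    thus "deg_index c12 c13 c22 c23 c33 E > 2*c12 + (real n - 3)*c22" using idx by linarith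
  qed
qed




theorem corollary1:
  fixes n :: nat and c12 c13 c22 c23 c33 :: real
  assumes "n \<ge> 3"
    and "c13 - 3*c22 + 2*c23 > c12 - 4*c22 + 3*c23"
    and "c12 - 4*c22 + 3*c23 > - (c22 - 2*c23 + c33)"
    and "- (c22 - 2*c23 + c33) > 0"
  shows "chem_graph n (n - 1) (path_V n) (path_E n) \<and>
    (\<forall>(V :: 'a set) E. chem_graph n (n - 1) V E \<longrightarrow>
        deg_index c12 c13 c22 c23 c33 (path_E n) \<le> deg_index c12 c13 c22 c23 c33 E \<and>
        (deg_index c12 c13 c22 c23 c33 E = deg_index c12 c13 c22 c23 c33 (path_E n)
           \<longrightarrow> graph_iso V E (path_V n) (path_E n)))"
proof -
  have pc: "chem_graph n (n - 1) (path_V n) (path_E n)" by (rule path_chem)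
  have "{v\<in>path_V n. vdeg (path_E n) v = 3} = {}" 
  proof -
    have "vdeg (path_E n) v \<noteq> 3" for v using path_deg[of n v] by linarith
    thus ?thesis by blast
  qed
  hence "card {v\<in>path_V n. vdeg (path_E n) v = 3} = 0" by (metis card.empty)
  hence IP: "deg_index c12 c13 c22 c23 c33 (path_E n) = 2*c12 + (real n - 3)*c22"
    using tree_index[OF pc assms] by blast
  have main: "deg_index c12 c13 c22 c23 c33 (path_E n) \<le> deg_index c12 c13 c22 c23 c33 E \<and>
        (deg_index c12 c13 c22 c23 c33 E = deg_index c12 c13 c22 c23 c33 (path_E n)
           \<longrightarrow> graph_iso V E (path_V n) (path_E n))" if ch: "chem_graph n (n - 1) V E" for V :: "'a set" and E
  proof (cases "card {v\<in>V. vdeg E v = 3} = 0")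
    case False
    thus ?thesis using tree_index[OF ch assms] IP by auto
  next
    case True
    have sg: "simple_graph V E" and con: "graph_connected V E" and cV: "card V = n"
      and cE: "card E = n - 1" and d3: "\<forall>v\<in>V. vdeg E v \<le> 3"
      using ch by (auto simp: chem_graph_def)
    have fV: "finite V" using sg_finV[OF sg] .
    have "{v\<in>V. vdeg E v = 3} = {}" using True fV by simp
    hence d2: "\<forall>x\<in>V. vdeg E x \<le> 2" using d3 by fastforce
    have tr: "is_tree V E" using sg con cV cE assms(1) by (simp add: is_tree_def)
    obtain v where v: "v \<in> V" "vdeg E v = 1" using tree_leaf[OF tr] cV assms(1) by fastforce
    obtain f where f: "bij_betw f V {0..<n}"
        "\<forall>x\<in>V. \<forall>y\<in>V. {x,y} \<in> E \<longleftrightarrow> {f x, f y} \<in> path_E n"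
      using path_iso_aux[OF cV tr d2 v(1)] v(2) by auto
    have "graph_iso V E (path_V n) (path_E n)"
      unfolding graph_iso_def path_V_def using f by blast
    thus ?thesis using tree_index[OF ch assms] IP True by auto
  qed
  show ?thesis using pc main by blast
qed


end
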